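(* Let $S$ be a state of a $d$-dimensional Hegselmann–Krause system with social network $G=(V,E)$ and confidence bound $\varepsilon>0$, and let $\lambda$ be the length of a longest edge of the influence network. Then $$\sum_{v\in V}|N_v|\,\|m_v\|_2\ \ge\ 2\lambda.$$
   Context: A $d$-dimensional Hegselmann–Krause system has a finite undirected graph $G=(V,E)$ (social network), a confidence bound $\varepsilon>0$, and a state given by positions $x_v\in\mathbb{R}^d$. In a state, $N_v=\{u:\{u,v\}\in E,\ \|x_u-x_v\|_2\le\varepsilon\}\cup\{v\}$ is the influencing neighborhood of $v$, $m_v=\frac{1}{|N_v|}\sum_{u\in N_v}(x_u-x_v)$ is its movement, the influence network is $(V,E_I)$ with $E_I=\{\{u,v\}\in E:\|x_u-x_v\|_2\le\varepsilon\}$, and the length of an edge $\{u,v\}$ is $\|x_u-x_v\|_2$. *)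

theory Defs
  imports "HOL-Analysis.Analysis"
begin

definition graph :: "'v set \<Rightarrow> 'v set set \<Rightarrow> bool" where
  "graph V E \<longleftrightarrow> finite V \<and> (\<forall>e\<in>E. \<exists>u v. e = {u, v} \<and> u \<in> V \<and> v \<in> V \<and> u \<noteq> v)"

definition nbhd :: "'v set set \<Rightarrow> real \<Rightarrow> ('v \<Rightarrow> real^'d) \<Rightarrow> 'v \<Rightarrow> 'v set" where
  "nbhd E \<epsilon> x v = {u. {u, v} \<in> E \<and> norm (x u - x v) \<le> \<epsilon>} \<union> {v}"

definition movement :: "'v set set \<Rightarrow> real \<Rightarrow> ('v \<Rightarrow> real^'d) \<Rightarrow> 'v \<Rightarrow> real^'d" where
  "movement E \<epsilon> x v =
     (1 / real (card (nbhd E \<epsilon> x v))) *\<^sub>R (\<Sum>u\<in>nbhd E \<epsilon> x v. x u - x v)"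

definition influence_edges :: "'v set set \<Rightarrow> real \<Rightarrow> ('v \<Rightarrow> real^'d) \<Rightarrow> 'v set set" where
  "influence_edges E \<epsilon> x = {e \<in> E. \<exists>u v. e = {u, v} \<and> norm (x u - x v) \<le> \<epsilon>}"

definition longest_influence_edge :: "'v set set \<Rightarrow> real \<Rightarrow> ('v \<Rightarrow> real^'d) \<Rightarrow> real" where
  "longest_influence_edge E \<epsilon> x =
     Max {norm (x u - x v) | u v. {u, v} \<in> influence_edges E \<epsilon> x}"

end

theory Submission
  imports Defs
begin

lemma edge_in_V:
  assumes "graph V E" "{u, v} \<in> E"
  shows "u \<in> V" "v \<in> V" "u \<noteq> v"
proof -
  obtain u' v' where "{u,v} = {u',v'}" "u' \<in> V" "v' \<in> V" "u' \<noteq> v'"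
    using assms unfolding graph_def by blast
  then show "u \<in> V" "v \<in> V" "u \<noteq> v" by (auto simp: doubleton_eq_iff)
qed

theorem corollary1:
  fixes V :: "'v set" and E :: "'v set set" and \<epsilon> :: real and x :: "'v \<Rightarrow> real^'d"
  assumes "graph V E" and "\<epsilon> > 0"
    and "influence_edges E \<epsilon> x \<noteq> {}"
  shows "(\<Sum>v\<in>V. real (card (nbhd E \<epsilon> x v)) * norm (movement E \<epsilon> x v))
           \<ge> 2 * longest_influence_edge E \<epsilon> x"
proof -
  have finV: "finite V" using assms(1) unfolding graph_def by blast
  define N where "N = nbhd E \<epsilon> x"
  define L where "L = longest_influence_edge E \<epsilon> x"
  define A where "A = {norm (x u - x v) | u v. {u, v} \<in> influence_edges E \<epsilon> x}"
  have NsubV: "N v \<subseteq> V \<union> {v}" for v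
    using edge_in_V[OF assms(1)] unfolding N_def nbhd_def by auto
  have finN: "finite (N v)" for v
    by (rule finite_subset[OF NsubV]) (simp add: finV)
  have vN: "v \<in> N v" for v unfolding N_def nbhd_def by auto
  have cardpos: "card (N v) > 0" for v using finN vN by (metis card_gt_0_iff empty_iff)
  have Nsym: "u \<in> N v \<longleftrightarrow> v \<in> N u" for u v
    unfolding N_def nbhd_def by (auto simp: insert_commute norm_minus_commute)
  have "A \<subseteq> (\<lambda>(u,v). norm (x u - x v)) ` (V \<times> V)"
  proof
    fix r assume "r \<in> A"
    then obtain u v where "r = norm (x u - x v)" "{u,v} \<in> E"
      unfolding A_def influence_edges_def by auto
    then show "r \<in> (\<lambda>(u,v). norm (x u - x v)) ` (V \<times> V)"
      using edge_in_V[OF assms(1)] by force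
  qed
  hence finA: "finite A" using finV by (meson finite_SigmaI finite_imageI finite_subset)
  have "A \<noteq> {}" using assms(3) unfolding A_def influence_edges_def by blast
  hence "L \<in> A" using finA unfolding L_def A_def longest_influence_edge_def by (meson Max_in)
  then obtain a b where Lab: "L = norm (x a - x b)" and abI: "{a,b} \<in> influence_edges E \<epsilon> x"
    unfolding A_def by blast
  have abE: "{a,b} \<in> E" using abI unfolding influence_edges_def by blast
  have "norm (x a - x b) \<le> \<epsilon>"
    using abI unfolding influence_edges_def
    by (auto simp: doubleton_eq_iff norm_minus_commute)
  hence bNa: "b \<in> N a" and aNb: "a \<in> N b" using abE
    unfolding N_def nbhd_def by (auto simp: insert_commute norm_minus_commute)
  have aV: "a \<in> V" and bV: "b \<in> V" and ab: "a \<noteq> b" using edge_in_V[OF assms(1) abE] by auto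
  define S where "S = (\<Sum>v\<in>V. real (card (N v)) * norm (movement E \<epsilon> x v))"
  have S0: "S \<ge> 0" unfolding S_def by (intro sum_nonneg) auto
  show ?thesis
  proof (cases "L = 0")
    case True then show ?thesis using S0 unfolding S_def N_def L_def by simp
  next
    case False
    hence Lpos: "L > 0" using Lab by simp
    define w where "w = (1 / L) *\<^sub>R (x b - x a)"
    have nw: "norm w = 1" unfolding w_def using Lpos Lab by (simp add: norm_minus_commute)
    define p where "p v = w \<bullet> x v" for v
    have pba: "p b - p a = L"
    proof -
      have "p b - p a = w \<bullet> (x b - x a)" unfolding p_def by (simp add: inner_diff_right)
      also have "\<dots> = (1/L) * (norm (x b - x a))^2" unfolding w_def
        by (simp add: power2_norm_eq_inner)
      also have "\<dots> = L" using Lab Lpos by (simp add: norm_minus_commute power2_eq_square)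
      finally show ?thesis .
    qed
    define s where "s v = (if p v \<le> p a then 1 else -1::real)" for v
    define f where "f v u = s v * (p u - p v)" for v u
    have step: "real (card (N v)) * norm (movement E \<epsilon> x v) \<ge> (\<Sum>u\<in>N v. f v u)" for v
    proof -
      have "real (card (N v)) * norm (movement E \<epsilon> x v) = norm (\<Sum>u\<in>N v. x u - x v)"
        unfolding movement_def N_def[symmetric] using cardpos[of v] by simp
      also have "\<dots> \<ge> s v * (w \<bullet> (\<Sum>u\<in>N v. x u - x v))"
      proof -
        have "\<bar>w \<bullet> (\<Sum>u\<in>N v. x u - x v)\<bar> \<le> norm w * norm (\<Sum>u\<in>N v. x u - x v)"
          by (rule Cauchy_Schwarz_ineq2)
        then show ?thesis using nw unfolding s_def by (auto simp: abs_le_iff)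
      qed
      moreover have "s v * (w \<bullet> (\<Sum>u\<in>N v. x u - x v)) = (\<Sum>u\<in>N v. f v u)"
        unfolding f_def p_def by (simp add: inner_sum_right inner_diff_right sum_distrib_left)
      ultimately show ?thesis by simp
    qed
    have S1: "S \<ge> (\<Sum>v\<in>V. \<Sum>u\<in>N v. f v u)" unfolding S_def by (rule sum_mono) (use step in auto)
    define R where "R = Sigma V N"
    have finR: "finite R" unfolding R_def using finV finN by auto
    have T1: "(\<Sum>v\<in>V. \<Sum>u\<in>N v. f v u) = (\<Sum>(v,u)\<in>R. f v u)"
      unfolding R_def using finV finN by (simp add: sum.Sigma)
    have Rsym: "prod.swap ` R = R"
    proof -
      have "(u,v) \<in> R" if "(v,u) \<in> R" for u v
      proof -
        have "v \<in> V" "u \<in> N v" using that unfolding R_def by auto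
        then show ?thesis using NsubV[of v] Nsym unfolding R_def by auto
      qed
      then show ?thesis by force
    qed
    have T2: "(\<Sum>(v,u)\<in>R. f u v) = (\<Sum>(v,u)\<in>R. f v u)"
    proof -
      have "(\<Sum>(v,u)\<in>R. f v u) = (\<Sum>(v,u)\<in>prod.swap ` R. f v u)" using Rsym by simp
      also have "\<dots> = (\<Sum>(v,u)\<in>R. f u v)"
        by (subst sum.reindex) (auto simp: case_prod_beta)
      finally show ?thesis by simp
    qed
    define g where "g = (\<lambda>(v,u). f v u + f u v)"
    have gnn: "g q \<ge> 0" for q
      unfolding g_def f_def s_def by (cases q) (auto simp: algebra_simps)
    have g1: "g (a,b) = 2 * L" and g2: "g (b,a) = 2 * L"
      using pba Lpos unfolding g_def f_def s_def by auto
    have abR: "(a,b) \<in> R" "(b,a) \<in> R" unfolding R_def using aV bV aNb bNa by auto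
    have "2 * (\<Sum>(v,u)\<in>R. f v u) = (\<Sum>q\<in>R. g q)"
      using T2 unfolding g_def by (simp add: sum.distrib split_def)
    also have "\<dots> \<ge> (\<Sum>q\<in>{(a,b),(b,a)}. g q)"
      by (rule sum_mono2) (use finR abR gnn in auto)
    moreover have "(\<Sum>q\<in>{(a,b),(b,a)}. g q) = 4 * L" using ab g1 g2 by simp
    ultimately have "(\<Sum>(v,u)\<in>R. f v u) \<ge> 2 * L" by linarith
    then show ?thesis using S1 T1 unfolding S_def N_def L_def by linarith
  qed
qed

end
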